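(* Let $n\ge 2$ and let $G\subset\mathbb{R}^n$ be a bounded domain with smooth boundary $\Gamma$. Let $p\in\mathbb{R}$ satisfy $n>p\geq \frac{n}{2}>1$ if $n>2$ (respectively $n>p>1$ if $n=2$). Let $V\in L^p(G)$ be scalar-valued. Let $k_1=\|T\|_{[L^p(G),W^1_p(G)]}$ be the operator norm of the Teodorescu transform $T$ from $L^p(G)$ to $W^1_p(G)$, let $C$ be the embedding constant of $W^1_p(G)\hookrightarrow L^{2p}(G)$, and set $k_2=k_1C^2$. Let $\underline{a}_0\in W^1_p(G)$ be vector-valued and define recursively $$\underline{a}_m:=T\big(V+|\underline{a}_{m-1}|^2\big),\quad m=1,2,\ldots$$ Assume $\|V\|_{L^p}\leq \frac{1}{4k_1k_2}$ and put $$W=\sqrt{\frac{1}{4k_2^2}-\frac{k_1}{k_2}\|V\|_{L^p}}.$$ If for some index $m_0$ $$\frac{1}{2k_2}-W\leq \|\underline{a}_{m_0}\|_{W^1_p}\leq \frac{1}{2k_2}+W,$$ then $\|\underline{a}_{m_0+1}\|_{W^1_p}\leq \|\underline{a}_{m_0}\|_{W^1_p}$, and the sequence $\{\underline{a}_m\}_{m\geq m_0}$ is bounded in $W^1_p(G)$ by $\|\underline{a}_{m_0}\|_{W^1_p}$.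
   Context: $\mathcal{C}\ell_{0,n}$ denotes the real Clifford algebra generated by an orthonormal basis $e_1,\dots,e_n$ of $\mathbb{R}^n$ with $e_ie_j+e_je_i=-2\delta_{ij}$; a vector-valued function is $\underline{a}(x)=\sum_{i=1}^n a_i(x)e_i$ with real $a_i$, and $|\underline{a}|^2=\sum_i a_i^2$. Function spaces of $\mathcal{C}\ell_{0,n}$-valued functions $f=\sum_A f_Ae_A$ are defined componentwise, with norm $\|f\|_B=\big(\sum_A\|f_A\|_B^2\big)^{1/2}$. The Teodorescu transform is $Tf(x)=\frac{1}{\omega_n}\int_G\frac{x-y}{|x-y|^n}f(y)\,dy$ (with $x-y$ viewed as a Clifford vector and $\omega_n$ the surface area of the unit sphere in $\mathbb{R}^n$); it is a right inverse of the Dirac operator $D=\sum_{j=1}^n e_j\partial_{x_j}$, and maps scalar-valued functions to vector-valued ones. *)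

theory Defs
  imports "HOL-Analysis.Analysis"
begin

definition partial_deriv :: "'n::finite \<Rightarrow> (real^'n \<Rightarrow> real) \<Rightarrow> real^'n \<Rightarrow> real" where
  "partial_deriv j f x = frechet_derivative f (at x) (axis j 1)"

fun Ck_on :: "nat \<Rightarrow> (real^'n::finite) set \<Rightarrow> (real^'n \<Rightarrow> real) \<Rightarrow> bool" where
  "Ck_on 0 U f = continuous_on U f"
| "Ck_on (Suc k) U f =
     ((\<forall>x\<in>U. f differentiable (at x)) \<and> (\<forall>j. Ck_on k U (partial_deriv j f)))"

definition smooth_on :: "(real^'n::finite) set \<Rightarrow> (real^'n \<Rightarrow> real) \<Rightarrow> bool" where
  "smooth_on U f = (\<forall>k. Ck_on k U f)"

definition smooth_bounded_domain :: "(real^'n::finite) set \<Rightarrow> bool" where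
  "smooth_bounded_domain G =
     (open G \<and> connected G \<and> bounded G \<and> G \<noteq> {} \<and>
      (\<forall>z\<in>frontier G. \<exists>U \<rho>. open U \<and> z \<in> U \<and> smooth_on U \<rho> \<and>
          (\<forall>x\<in>U. \<exists>v. frechet_derivative \<rho> (at x) v \<noteq> 0) \<and>
          G \<inter> U = {x\<in>U. \<rho> x < 0}))"

definition in_Lp :: "real \<Rightarrow> (real^'n::finite) set \<Rightarrow> (real^'n \<Rightarrow> real) \<Rightarrow> bool" where
  "in_Lp p G u =
     ((\<lambda>x. indicator G x * u x) \<in> borel_measurable lebesgue \<and>
      set_integrable lebesgue G (\<lambda>x. \<bar>u x\<bar> powr p))"

definition Lp_norm :: "real \<Rightarrow> (real^'n::finite) set \<Rightarrow> (real^'n \<Rightarrow> real) \<Rightarrow> real" where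
  "Lp_norm p G u = (LINT x:G|lebesgue. \<bar>u x\<bar> powr p) powr (1 / p)"

definition test_fun :: "(real^'n::finite) set \<Rightarrow> (real^'n \<Rightarrow> real) \<Rightarrow> bool" where
  "test_fun G \<phi> = (smooth_on UNIV \<phi> \<and> compact (closure {x. \<phi> x \<noteq> 0})
                     \<and> closure {x. \<phi> x \<noteq> 0} \<subseteq> G)"

definition weak_partial :: "(real^'n::finite) set \<Rightarrow> 'n \<Rightarrow> (real^'n \<Rightarrow> real) \<Rightarrow> (real^'n \<Rightarrow> real) \<Rightarrow> bool" where
  "weak_partial G j u g =
     (\<forall>\<phi>. test_fun G \<phi> \<longrightarrow>
        (LINT x:G|lebesgue. u x * partial_deriv j \<phi> x) = - (LINT x:G|lebesgue. g x * \<phi> x))"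

definition in_W1p :: "real \<Rightarrow> (real^'n::finite) set \<Rightarrow> (real^'n \<Rightarrow> real) \<Rightarrow> bool" where
  "in_W1p p G u = (in_Lp p G u \<and> (\<forall>j. \<exists>g. in_Lp p G g \<and> weak_partial G j u g))"

definition W1p_norm :: "real \<Rightarrow> (real^'n::finite) set \<Rightarrow> (real^'n \<Rightarrow> real) \<Rightarrow> real" where
  "W1p_norm p G u =
     (Lp_norm p G u powr p +
      (\<Sum>j\<in>UNIV. Lp_norm p G (SOME g. in_Lp p G g \<and> weak_partial G j u g) powr p)) powr (1 / p)"

text \<open>An element of Cl_{0,n} is represented by its coefficients (f_A) indexed by
  subsets A of the (ordered, finite) index type; e_A = e_{a1}...e_{ak}, a1<...<ak.\<close>
type_synonym 'n cl = "'n set \<Rightarrow> real"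

definition symd :: "'a set \<Rightarrow> 'a set \<Rightarrow> 'a set" where
  "symd A B = (A - B) \<union> (B - A)"

text \<open>e_i e_A = cl_sign i A * e_{{i} symd A}\<close>
definition cl_sign :: "'n::linorder \<Rightarrow> 'n set \<Rightarrow> real" where
  "cl_sign i A = (-1) ^ card {a\<in>A. a < i} * (if i \<in> A then -1 else 1)"

text \<open>Clifford product of the vector sum_i v_i e_i with a Clifford number a.\<close>
definition cl_vmult :: "real^'n::{finite,linorder} \<Rightarrow> 'n cl \<Rightarrow> 'n cl" where
  "cl_vmult v a = (\<lambda>C. \<Sum>i\<in>UNIV. v $ i * cl_sign i (symd {i} C) * a (symd {i} C))"

definition cl_scalar :: "real \<Rightarrow> 'n cl" where
  "cl_scalar s = (\<lambda>A. if A = {} then s else 0)"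

definition vec_abs2 :: "('n::finite) cl \<Rightarrow> real" where
  "vec_abs2 a = (\<Sum>i\<in>UNIV. (a {i})\<^sup>2)"

definition vector_valued_on :: "(real^'n::finite) set \<Rightarrow> (real^'n \<Rightarrow> 'n cl) \<Rightarrow> bool" where
  "vector_valued_on G f = (\<forall>x\<in>G. \<forall>A. card A \<noteq> 1 \<longrightarrow> f x A = 0)"

definition cl_Lp :: "real \<Rightarrow> (real^'n::finite) set \<Rightarrow> (real^'n \<Rightarrow> 'n cl) \<Rightarrow> bool" where
  "cl_Lp p G f = (\<forall>A. in_Lp p G (\<lambda>x. f x A))"

definition cl_Lp_norm :: "real \<Rightarrow> (real^'n::finite) set \<Rightarrow> (real^'n \<Rightarrow> 'n cl) \<Rightarrow> real" where
  "cl_Lp_norm p G f = sqrt (\<Sum>A\<in>UNIV. (Lp_norm p G (\<lambda>x. f x A))\<^sup>2)"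

definition cl_W1p :: "real \<Rightarrow> (real^'n::finite) set \<Rightarrow> (real^'n \<Rightarrow> 'n cl) \<Rightarrow> bool" where
  "cl_W1p p G f = (\<forall>A. in_W1p p G (\<lambda>x. f x A))"

definition cl_W1p_norm :: "real \<Rightarrow> (real^'n::finite) set \<Rightarrow> (real^'n \<Rightarrow> 'n cl) \<Rightarrow> real" where
  "cl_W1p_norm p G f = sqrt (\<Sum>A\<in>UNIV. (W1p_norm p G (\<lambda>x. f x A))\<^sup>2)"

text \<open>omega_n = surface area of the unit sphere in R^n = n * vol(unit ball).\<close>
definition omega :: "nat \<Rightarrow> real" where
  "omega n = real n * unit_ball_vol (real n)"

definition teodorescu :: "(real^'n::{finite,linorder}) set \<Rightarrow> (real^('n::{finite,linorder}) \<Rightarrow> 'n cl) \<Rightarrow> real^('n::{finite,linorder}) \<Rightarrow> 'n cl" where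
  "teodorescu G f x = (\<lambda>C. (1 / omega CARD('n)) *
      (LINT y:G|lebesgue. cl_vmult ((1 / norm (x - y) ^ CARD('n)) *\<^sub>R (x - y)) (f y) C))"

definition teo_bounded :: "real \<Rightarrow> (real^'n::{finite,linorder}) set \<Rightarrow> bool" where
  "teo_bounded p G =
     ((\<forall>f. cl_Lp p G f \<longrightarrow> cl_W1p p G (teodorescu G f)) \<and>
      bdd_above {cl_W1p_norm p G (teodorescu G f) / cl_Lp_norm p G f | f.
                   cl_Lp p G f \<and> cl_Lp_norm p G f \<noteq> 0})"

definition teo_opnorm :: "real \<Rightarrow> (real^'n::{finite,linorder}) set \<Rightarrow> real" where
  "teo_opnorm p G =
     Sup {cl_W1p_norm p G (teodorescu G f) / cl_Lp_norm p G f | f.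
            cl_Lp p G f \<and> cl_Lp_norm p G f \<noteq> 0}"

definition embed_bounded :: "real \<Rightarrow> (real^'n::finite) set \<Rightarrow> bool" where
  "embed_bounded p G =
     ((\<forall>u. cl_W1p p G u \<longrightarrow> cl_Lp (2 * p) G u) \<and>
      bdd_above {cl_Lp_norm (2 * p) G u / cl_W1p_norm p G u | u.
                   cl_W1p p G u \<and> cl_W1p_norm p G u \<noteq> 0})"

definition embed_const :: "real \<Rightarrow> (real^'n::finite) set \<Rightarrow> real" where
  "embed_const p G =
     Sup {cl_Lp_norm (2 * p) G u / cl_W1p_norm p G u | u.
            cl_W1p p G u \<and> cl_W1p_norm p G u \<noteq> 0}"

end

theory Submission
  imports Defs
begin

lemma powr_convex0:
  fixes x y l p :: real
  assumes p: "p \<ge> 1" and x: "x \<ge> 0" and y: "y \<ge> 0" and l: "0 \<le> l" "l \<le> 1"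
  shows "(l * x + (1 - l) * y) powr p \<le> l * x powr p + (1 - l) * y powr p"
proof -
  have pw: "t powr p \<le> t" if "0 \<le> t" "t \<le> 1" for t :: real
  proof (cases "t = 0")
    case True then show ?thesis by simp
  next
    case False
    then have "t powr p \<le> t powr 1" using that p by (intro powr_mono') auto
    then show ?thesis using False that by simp
  qed
  show ?thesis
  proof (cases "x = 0 \<or> y = 0")
    case True
    then show ?thesis
    proof
      assume "x = 0"
      then have "(l * x + (1 - l) * y) powr p = (1 - l) powr p * y powr p"
        using l y by (simp add: powr_mult)
      also have "\<dots> \<le> (1 - l) * y powr p" using pw[of "1 - l"] l by (intro mult_right_mono) auto
      finally show ?thesis using \<open>x = 0\<close> by simp
    next
      assume "y = 0"
      then have "(l * x + (1 - l) * y) powr p = l powr p * x powr p"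
        using l x by (simp add: powr_mult)
      also have "\<dots> \<le> l * x powr p" using pw[of l] l by (intro mult_right_mono) auto
      finally show ?thesis using \<open>y = 0\<close> by simp
    qed
  next
    case False
    then have "x > 0" "y > 0" using x y by auto
    have cv: "\<forall>x\<in>{0<..}. \<forall>y\<in>{0<..}. \<forall>u\<ge>0. \<forall>v\<ge>0. u + v = 1 \<longrightarrow> (u * x + v * y) powr p \<le> u * x powr p + v * y powr p"
      using powr_convex[OF p] unfolding convex_on_def by simp
    have "(l * x + (1 - l) * y) powr p \<le> l * x powr p + (1 - l) * y powr p"
      using cv \<open>x > 0\<close> \<open>y > 0\<close> l by simp
    then show ?thesis by (simp add: algebra_simps)
  qed
qed

lemma pointwise_mink:
  fixes s t A B p :: real
  assumes p: "p \<ge> 1" and A: "A > 0" and B: "B > 0"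
  shows "\<bar>s + t\<bar> powr p \<le> (A + B) powr (p - 1) * (A powr (1 - p) * \<bar>s\<bar> powr p + B powr (1 - p) * \<bar>t\<bar> powr p)"
proof -
  define l where "l = A / (A + B)"
  have l: "0 \<le> l" "l \<le> 1" "1 - l = B / (A + B)" using A B by (auto simp: l_def field_simps)
  have "(A + B) * (l * (\<bar>s\<bar> / A) + (1 - l) * (\<bar>t\<bar> / B)) = \<bar>s\<bar> + \<bar>t\<bar>"
    using A B unfolding l(3) by (simp add: l_def divide_simps)
  then have "\<bar>s + t\<bar> \<le> (A + B) * (l * (\<bar>s\<bar> / A) + (1 - l) * (\<bar>t\<bar> / B))"
    by (simp add: abs_triangle_ineq)
  then have "\<bar>s + t\<bar> powr p \<le> ((A + B) * (l * (\<bar>s\<bar> / A) + (1 - l) * (\<bar>t\<bar> / B))) powr p"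
    using p by (intro powr_mono2) auto
  also have "\<dots> = (A + B) powr p * (l * (\<bar>s\<bar> / A) + (1 - l) * (\<bar>t\<bar> / B)) powr p"
    using A B l by (simp add: powr_mult)
  also have "\<dots> \<le> (A + B) powr p * (l * (\<bar>s\<bar> / A) powr p + (1 - l) * (\<bar>t\<bar> / B) powr p)"
    using A B l p by (intro mult_left_mono powr_convex0) auto
  also have "\<dots> = (A + B) powr (p - 1) * (A powr (1 - p) * \<bar>s\<bar> powr p + B powr (1 - p) * \<bar>t\<bar> powr p)"
  proof -
    have e1: "(A + B) powr p = (A + B) powr (p - 1) * (A + B)" using A B
      by (simp add: powr_diff)
    have e2: "(\<bar>s\<bar> / A) powr p = \<bar>s\<bar> powr p / A powr p" using A by (simp add: powr_divide)
    have e3: "(\<bar>t\<bar> / B) powr p = \<bar>t\<bar> powr p / B powr p" using B by (simp add: powr_divide)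
    have e4: "A powr (1 - p) = A / A powr p" using A by (simp add: powr_diff)
    have e5: "B powr (1 - p) = B / B powr p" using B by (simp add: powr_diff)
    have gen: "c * (A + B) * (A / (A + B) * (S / PA) + B / (A + B) * (T / PB)) = c * (A / PA * S + B / PB * T)"
      for c S T PA PB :: real
    proof -
      have "(A + B) * (A / (A + B) * (S / PA) + B / (A + B) * (T / PB)) = A * (S / PA) + B * (T / PB)"
        using A B by (simp add: distrib_left)
      then show ?thesis by (simp add: mult.assoc)
    qed
    show ?thesis unfolding e1 e2 e3 e4 e5 l(3) unfolding l_def by (rule gen)
  qed
  finally show ?thesis .
qed

lemma Lp_norm_nonneg: "Lp_norm p G u \<ge> 0"
  unfolding Lp_norm_def by (rule powr_ge_zero)

lemma Lp_int_nonneg: "(LINT x:G|lebesgue. \<bar>(u::real^'n::finite \<Rightarrow> real) x\<bar> powr p) \<ge> 0"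
  unfolding set_lebesgue_integral_def by (intro integral_nonneg_AE AE_I2) (simp add: indicator_def)

lemma Lp_norm_zero_AE:
  fixes u :: "real^'n::finite \<Rightarrow> real"
  assumes u: "in_Lp p G u" and p: "p > 0" and z: "Lp_norm p G u = 0"
  shows "AE x in lebesgue. x \<in> G \<longrightarrow> u x = 0"
proof -
  have int: "integrable lebesgue (\<lambda>x. indicator G x *\<^sub>R \<bar>u x\<bar> powr p)"
    using u by (simp add: in_Lp_def set_integrable_def)
  have "(LINT x:G|lebesgue. \<bar>u x\<bar> powr p) = 0"
    using z p by (simp add: Lp_norm_def)
  then have "integral\<^sup>L lebesgue (\<lambda>x. indicator G x *\<^sub>R \<bar>u x\<bar> powr p) = 0"
    by (simp add: set_lebesgue_integral_def)
  then have "AE x in lebesgue. indicator G x *\<^sub>R \<bar>u x\<bar> powr p = 0"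
    using integral_nonneg_eq_0_iff_AE[OF int] by (simp add: indicator_def)
  then show ?thesis
    by eventually_elim (auto simp: indicator_def split: if_splits)
qed

lemma in_Lp_add:
  fixes u v :: "real^'n::finite \<Rightarrow> real"
  assumes p: "p \<ge> 1" and u: "in_Lp p G u" and v: "in_Lp p G v"
  shows "in_Lp p G (\<lambda>x. u x + v x)"
proof -
  have mu: "(\<lambda>x. indicator G x * u x) \<in> borel_measurable lebesgue"
    and mv: "(\<lambda>x. indicator G x * v x) \<in> borel_measurable lebesgue"
    and iu: "integrable lebesgue (\<lambda>x. indicator G x *\<^sub>R \<bar>u x\<bar> powr p)"
    and iv: "integrable lebesgue (\<lambda>x. indicator G x *\<^sub>R \<bar>v x\<bar> powr p)"
    using u v by (auto simp: in_Lp_def set_integrable_def)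
  have eq1: "(\<lambda>x. indicator G x * (u x + v x)) = (\<lambda>x. indicator G x * u x + indicator G x * v x)"
    by (simp add: algebra_simps)
  have m1: "(\<lambda>x. indicator G x * (u x + v x)) \<in> borel_measurable lebesgue"
    unfolding eq1 using mu mv by simp
  have eq2: "(\<lambda>x. indicator G x *\<^sub>R \<bar>u x + v x\<bar> powr p) = (\<lambda>x. \<bar>indicator G x * (u x + v x)\<bar> powr p)"
    using p by (auto simp: indicator_def)
  have m2: "(\<lambda>x. indicator G x *\<^sub>R \<bar>u x + v x\<bar> powr p) \<in> borel_measurable lebesgue"
    unfolding eq2 using m1 by measurable
  have "integrable lebesgue (\<lambda>x. indicator G x *\<^sub>R \<bar>u x + v x\<bar> powr p)"
  proof (rule Bochner_Integration.integrable_bound[OF _ m2])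
    show "integrable lebesgue (\<lambda>x. (1 + 1) powr (p - 1) * (indicator G x *\<^sub>R \<bar>u x\<bar> powr p + indicator G x *\<^sub>R \<bar>v x\<bar> powr p))"
      using iu iv by simp
    show "AE x in lebesgue. norm (indicator G x *\<^sub>R \<bar>u x + v x\<bar> powr p)
        \<le> norm ((1 + 1) powr (p - 1) * (indicator G x *\<^sub>R \<bar>u x\<bar> powr p + indicator G x *\<^sub>R \<bar>v x\<bar> powr p))"
    proof (rule AE_I2)
      fix x
      have "\<bar>u x + v x\<bar> powr p \<le> (1 + 1) powr (p - 1) * (1 powr (1 - p) * \<bar>u x\<bar> powr p + 1 powr (1 - p) * \<bar>v x\<bar> powr p)"
        by (rule pointwise_mink[OF p]) auto
      then show "norm (indicator G x *\<^sub>R \<bar>u x + v x\<bar> powr p)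
        \<le> norm ((1 + 1) powr (p - 1) * (indicator G x *\<^sub>R \<bar>u x\<bar> powr p + indicator G x *\<^sub>R \<bar>v x\<bar> powr p))"
        by (simp add: indicator_def)
    qed
  qed
  then show ?thesis using m1 by (simp add: in_Lp_def set_integrable_def)
qed

lemma Lp_minkowski:
  fixes u v :: "real^'n::finite \<Rightarrow> real"
  assumes p: "p \<ge> 1" and u: "in_Lp p G u" and v: "in_Lp p G v"
  shows "Lp_norm p G (\<lambda>x. u x + v x) \<le> Lp_norm p G u + Lp_norm p G v"
proof -
  have uv: "in_Lp p G (\<lambda>x. u x + v x)" using in_Lp_add[OF p u v] .
  have iu: "integrable lebesgue (\<lambda>x. indicator G x *\<^sub>R \<bar>u x\<bar> powr p)"
    and iv: "integrable lebesgue (\<lambda>x. indicator G x *\<^sub>R \<bar>v x\<bar> powr p)"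
    and iuv: "integrable lebesgue (\<lambda>x. indicator G x *\<^sub>R \<bar>u x + v x\<bar> powr p)"
    using u v uv by (auto simp: in_Lp_def set_integrable_def)
  define IU where "IU = (LINT x:G|lebesgue. \<bar>u x\<bar> powr p)"
  define IV where "IV = (LINT x:G|lebesgue. \<bar>v x\<bar> powr p)"
  define IW where "IW = (LINT x:G|lebesgue. \<bar>u x + v x\<bar> powr p)"
  define A where "A = IU powr (1 / p)"
  define B where "B = IV powr (1 / p)"
  have IU0: "IU \<ge> 0" and IV0: "IV \<ge> 0" and IW0: "IW \<ge> 0"
    unfolding IU_def IV_def IW_def by (rule Lp_int_nonneg)+
  have nA: "Lp_norm p G u = A" and nB: "Lp_norm p G v = B" and nW: "Lp_norm p G (\<lambda>x. u x + v x) = IW powr (1/p)"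
    by (simp_all add: Lp_norm_def A_def B_def IU_def IV_def IW_def)
  have AU: "A powr p = IU" using IU0 p by (simp add: A_def powr_powr)
  have BV: "B powr p = IV" using IV0 p by (simp add: B_def powr_powr)
  show ?thesis
  proof (cases "A = 0 \<or> B = 0")
    case True
    then show ?thesis
    proof
      assume A0: "A = 0"
      have "AE x in lebesgue. x \<in> G \<longrightarrow> u x = 0"
        using Lp_norm_zero_AE[OF u] p A0 nA by simp
      then have "AE x in lebesgue. indicator G x *\<^sub>R \<bar>u x + v x\<bar> powr p = indicator G x *\<^sub>R \<bar>v x\<bar> powr p"
        by eventually_elim (auto simp: indicator_def)
      then have "IW = IV" unfolding IW_def IV_def set_lebesgue_integral_def
        using iuv iv by (intro integral_cong_AE) auto
      then show ?thesis using nA nB nW A0 by (simp add: B_def)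
    next
      assume B0: "B = 0"
      have "AE x in lebesgue. x \<in> G \<longrightarrow> v x = 0"
        using Lp_norm_zero_AE[OF v] p B0 nB by simp
      then have "AE x in lebesgue. indicator G x *\<^sub>R \<bar>u x + v x\<bar> powr p = indicator G x *\<^sub>R \<bar>u x\<bar> powr p"
        by eventually_elim (auto simp: indicator_def)
      then have "IW = IU" unfolding IW_def IU_def set_lebesgue_integral_def
        using iuv iu by (intro integral_cong_AE) auto
      then show ?thesis using nA nB nW B0 by (simp add: A_def)
    qed
  next
    case False
    then have A: "A > 0" and B: "B > 0" by (auto simp: A_def B_def)
    define c where "c = (A + B) powr (p - 1)"
    have "IW \<le> integral\<^sup>L lebesgue (\<lambda>x. c * (A powr (1 - p) * (indicator G x *\<^sub>R \<bar>u x\<bar> powr p) + B powr (1 - p) * (indicator G x *\<^sub>R \<bar>v x\<bar> powr p)))"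
      unfolding IW_def set_lebesgue_integral_def
    proof (rule integral_mono)
      show "integrable lebesgue (\<lambda>x. c * (A powr (1 - p) * (indicator G x *\<^sub>R \<bar>u x\<bar> powr p) + B powr (1 - p) * (indicator G x *\<^sub>R \<bar>v x\<bar> powr p)))"
        using iu iv by simp
      fix x
      have "\<bar>u x + v x\<bar> powr p \<le> c * (A powr (1 - p) * \<bar>u x\<bar> powr p + B powr (1 - p) * \<bar>v x\<bar> powr p)"
        unfolding c_def by (rule pointwise_mink[OF p A B])
      then show "indicator G x *\<^sub>R \<bar>u x + v x\<bar> powr p \<le> c * (A powr (1 - p) * (indicator G x *\<^sub>R \<bar>u x\<bar> powr p) + B powr (1 - p) * (indicator G x *\<^sub>R \<bar>v x\<bar> powr p))"
        by (simp add: indicator_def)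
    qed (rule iuv)
    also have "\<dots> = c * (A powr (1 - p) * IU + B powr (1 - p) * IV)"
      using iu iv by (simp add: IU_def IV_def set_lebesgue_integral_def)
    also have "\<dots> = c * (A + B)"
    proof -
      have "A powr (1 - p) * IU = A" unfolding AU[symmetric] using A by (simp add: powr_add[symmetric])
      moreover have "B powr (1 - p) * IV = B" unfolding BV[symmetric] using B by (simp add: powr_add[symmetric])
      ultimately show ?thesis by simp
    qed
    also have "\<dots> = (A + B) powr p" using A B by (simp add: c_def powr_diff)
    finally have "IW \<le> (A + B) powr p" .
    then have "IW powr (1/p) \<le> ((A + B) powr p) powr (1/p)"
      using IW0 p by (intro powr_mono2) auto
    also have "\<dots> = A + B" using A B p by (simp add: powr_powr)
    finally show ?thesis using nA nB nW by simp
  qed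
qed

lemma in_Lp_const:
  fixes G :: "(real^'n::finite) set"
  assumes "open G" "bounded G"
  shows "in_Lp p G (\<lambda>x. c)"
proof -
  have Gs: "G \<in> sets lebesgue" using assms by simp
  have Gf: "emeasure lebesgue G < \<infinity>"
    using lmeasurable_open[OF assms(2,1)] unfolding fmeasurable_def by blast
  have "(\<lambda>x. indicator G x * c) \<in> borel_measurable lebesgue"
    using Gs by measurable
  moreover have "integrable lebesgue (\<lambda>x. indicator G x *\<^sub>R (\<bar>c\<bar> powr p))"
    using Gs Gf by (rule integrable_indicator)
  ultimately show ?thesis by (simp add: in_Lp_def set_integrable_def)
qed

lemma in_Lp_zero:
  fixes G :: "(real^'n::finite) set"
  shows "in_Lp p G (\<lambda>x. 0)"
  by (simp add: in_Lp_def set_integrable_def)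

lemma Lp_norm_zero_fun: "Lp_norm p G (\<lambda>x. 0) = 0"
  by (simp add: Lp_norm_def set_lebesgue_integral_def)

lemma Lp_norm_const:
  fixes G :: "(real^'n::finite) set"
  assumes "c > 0" "p > 0"
  shows "Lp_norm p G (\<lambda>x. c) = c * Lp_norm p G (\<lambda>x. 1)"
proof -
  have "(LINT x:G|lebesgue. \<bar>c\<bar> powr p) = c powr p * (LINT x:G|lebesgue. \<bar>1::real\<bar> powr p)"
    using assms by (simp add: set_lebesgue_integral_def)
  then show ?thesis using assms
    by (simp add: Lp_norm_def powr_mult powr_powr Lp_int_nonneg)
qed

lemma Lp_norm_one_pos:
  fixes G :: "(real^'n::finite) set"
  assumes "open G" "bounded G" "G \<noteq> {}" "p > 0"
  shows "Lp_norm p G (\<lambda>x. 1) > 0"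
proof (rule ccontr)
  assume "\<not> ?thesis"
  then have "Lp_norm p G (\<lambda>x. 1) = 0" using Lp_norm_nonneg[of p G "\<lambda>x. 1"] by linarith
  then have "AE x in lebesgue. x \<in> G \<longrightarrow> (1::real) = 0"
    by (rule Lp_norm_zero_AE[OF in_Lp_const[OF assms(1,2)] assms(4)])
  then have "AE x in lebesgue. x \<in> G \<longrightarrow> x \<in> {}" by simp
  moreover obtain z where "z \<in> G" using assms(3) by auto
  ultimately show False using mem_closed_if_AE_lebesgue_open[OF assms(1), of "{}" z] by simp
qed

lemma sq_powr_abs: "p > 0 \<Longrightarrow> \<bar>(t::real)\<^sup>2\<bar> powr p = \<bar>t\<bar> powr (2 * p)"
proof (cases "t = 0")
  case False
  then show ?thesis
    by (simp add: powr_powr[symmetric] powr_realpow)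
qed simp

lemma powr_sq: "(x powr a)\<^sup>2 = (x::real) powr (2 * a)"
  by (simp add: power2_eq_square powr_add[symmetric])

lemma in_Lp_sq:
  fixes u :: "real^'n::finite \<Rightarrow> real"
  assumes p: "p > 0" and u: "in_Lp (2 * p) G u"
  shows "in_Lp p G (\<lambda>x. (u x)\<^sup>2)" and "Lp_norm p G (\<lambda>x. (u x)\<^sup>2) = (Lp_norm (2 * p) G u)\<^sup>2"
proof -
  have m: "(\<lambda>x. indicator G x * u x) \<in> borel_measurable lebesgue"
    and i: "integrable lebesgue (\<lambda>x. indicator G x *\<^sub>R \<bar>u x\<bar> powr (2 * p))"
    using u by (auto simp: in_Lp_def set_integrable_def)
  have eq: "(\<lambda>x. indicator G x * (u x)\<^sup>2) = (\<lambda>x. (indicator G x * u x)\<^sup>2)"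
    by (auto simp: indicator_def)
  have "(\<lambda>x. indicator G x * (u x)\<^sup>2) \<in> borel_measurable lebesgue"
    unfolding eq using m by measurable
  moreover have eq2: "(\<lambda>x. \<bar>(u x)\<^sup>2\<bar> powr p) = (\<lambda>x. \<bar>u x\<bar> powr (2 * p))"
    using sq_powr_abs[OF p] by auto
  ultimately show "in_Lp p G (\<lambda>x. (u x)\<^sup>2)" using i by (simp add: in_Lp_def set_integrable_def)
  have I0: "(LINT x:G|lebesgue. \<bar>u x\<bar> powr (2 * p)) \<ge> 0" by (rule Lp_int_nonneg)
  show "Lp_norm p G (\<lambda>x. (u x)\<^sup>2) = (Lp_norm (2 * p) G u)\<^sup>2"
    unfolding Lp_norm_def eq2 powr_sq using p by simp
qed

lemma in_Lp_sum:
  fixes f :: "'i \<Rightarrow> real^'n::finite \<Rightarrow> real"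
  assumes p: "p \<ge> 1" and I: "finite I" and f: "\<And>i. i \<in> I \<Longrightarrow> in_Lp p G (f i)"
  shows "in_Lp p G (\<lambda>x. \<Sum>i\<in>I. f i x) \<and> Lp_norm p G (\<lambda>x. \<Sum>i\<in>I. f i x) \<le> (\<Sum>i\<in>I. Lp_norm p G (f i))"
  using I f
proof (induction I rule: finite_induct)
  case empty
  then show ?case by (simp add: in_Lp_zero Lp_norm_zero_fun)
next
  case (insert j I)
  have fj: "in_Lp p G (f j)" using insert by simp
  have IH: "in_Lp p G (\<lambda>x. \<Sum>i\<in>I. f i x)" "Lp_norm p G (\<lambda>x. \<Sum>i\<in>I. f i x) \<le> (\<Sum>i\<in>I. Lp_norm p G (f i))"
    using insert by auto
  have "in_Lp p G (\<lambda>x. f j x + (\<Sum>i\<in>I. f i x))"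
    using in_Lp_add[OF p fj IH(1)] .
  moreover have "Lp_norm p G (\<lambda>x. f j x + (\<Sum>i\<in>I. f i x)) \<le> Lp_norm p G (f j) + (\<Sum>i\<in>I. Lp_norm p G (f i))"
    using Lp_minkowski[OF p fj IH(1)] IH(2) by linarith
  ultimately show ?case using insert by simp
qed

lemma sqrt_sum_sq_ge:
  fixes h :: "'a::finite \<Rightarrow> real"
  shows "\<bar>h A\<bar> \<le> sqrt (\<Sum>B\<in>UNIV. (h B)\<^sup>2)"
proof -
  have "(h A)\<^sup>2 \<le> (\<Sum>B\<in>UNIV. (h B)\<^sup>2)"
    by (rule member_le_sum) auto
  then have "sqrt ((h A)\<^sup>2) \<le> sqrt (\<Sum>B\<in>UNIV. (h B)\<^sup>2)" by (rule real_sqrt_le_mono)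
  then show ?thesis by simp
qed

lemma sqrt_sum_sq_zero:
  fixes h :: "'a::finite \<Rightarrow> real"
  assumes "sqrt (\<Sum>B\<in>UNIV. (h B)\<^sup>2) = 0"
  shows "h A = 0"
  using sqrt_sum_sq_ge[of h A] assms by simp

lemma cl_Lp_norm_scalar:
  fixes g :: "real^'n::finite \<Rightarrow> real"
  shows "cl_Lp_norm p G (\<lambda>x. cl_scalar (g x)) = Lp_norm p G g"
proof -
  have eq: "(\<lambda>x. cl_scalar (g x) A) = (if A = {} then g else (\<lambda>x. 0))" for A :: "'n set"
    by (auto simp: cl_scalar_def)
  have pt: "(Lp_norm p G (\<lambda>x. cl_scalar (g x) A))\<^sup>2 = (if A = {} then (Lp_norm p G g)\<^sup>2 else 0)" for A :: "'n set"
    by (simp add: eq Lp_norm_zero_fun)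
  have "(\<Sum>A\<in>(UNIV :: 'n set set). (Lp_norm p G (\<lambda>x. cl_scalar (g x) A))\<^sup>2)
      = (\<Sum>A\<in>(UNIV :: 'n set set). (if A = {} then (Lp_norm p G g)\<^sup>2 else 0))"
    by (simp only: pt)
  also have "\<dots> = (Lp_norm p G g)\<^sup>2" by simp
  finally show ?thesis
    unfolding cl_Lp_norm_def using Lp_norm_nonneg[of p G g] by simp
qed

lemma cl_Lp_scalar:
  fixes g :: "real^'n::finite \<Rightarrow> real"
  assumes "in_Lp p G g"
  shows "cl_Lp p G (\<lambda>x. cl_scalar (g x))"
  unfolding cl_Lp_def
proof
  fix A :: "'n set"
  have eq: "(\<lambda>x. cl_scalar (g x) A) = (if A = {} then g else (\<lambda>x. 0))"
    by (auto simp: cl_scalar_def)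
  show "in_Lp p G (\<lambda>x. cl_scalar (g x) A)"
  proof (cases "A = {}")
    case True
    then show ?thesis using assms by (simp add: cl_scalar_def)
  next
    case False
    then have "(\<lambda>x. cl_scalar (g x) A) = (\<lambda>x. 0)" by (simp add: cl_scalar_def)
    then show ?thesis using in_Lp_zero[of p G] by simp
  qed
qed

lemma teo_zero:
  fixes f :: "real^('n::{finite,linorder}) \<Rightarrow> 'n cl"
  assumes "\<And>A. AE y in lebesgue. y \<in> G \<longrightarrow> f y A = 0"
  shows "teodorescu G f = (\<lambda>x C. 0)"
proof (intro ext)
  fix x :: "real^('n::{finite,linorder})" and C :: "'n set"
  have "AE y in lebesgue. \<forall>A\<in>UNIV. y \<in> G \<longrightarrow> f y A = 0"
    by (intro AE_finite_allI) (auto simp: assms)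
  then have "AE y in lebesgue. indicator G y *\<^sub>R cl_vmult ((1 / norm (x - y) ^ CARD('n)) *\<^sub>R (x - y)) (f y) C = 0"
    by eventually_elim (auto simp: indicator_def cl_vmult_def)
  then have "(LINT y:G|lebesgue. cl_vmult ((1 / norm (x - y) ^ CARD('n)) *\<^sub>R (x - y)) (f y) C) = 0"
    unfolding set_lebesgue_integral_def by (rule integral_eq_zero_AE)
  then show "teodorescu G f x C = 0" by (simp add: teodorescu_def)
qed

lemma teo_scalar_empty:
  fixes g :: "real^('n::{finite,linorder}) \<Rightarrow> real"
  shows "teodorescu G (\<lambda>x. cl_scalar (g x)) x {} = 0"
proof -
  have "cl_vmult v (cl_scalar c) {} = 0" for v :: "real^('n::{finite,linorder})" and c
    by (simp add: cl_vmult_def cl_scalar_def symd_def)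
  then show ?thesis by (simp add: teodorescu_def set_lebesgue_integral_def)
qed

lemma W1p_norm_ge_comp:
  "\<bar>W1p_norm p G (\<lambda>x. f x A)\<bar> \<le> cl_W1p_norm p G f"
  unfolding cl_W1p_norm_def by (rule sqrt_sum_sq_ge[where h = "\<lambda>A. W1p_norm p G (\<lambda>x. f x A)"])

lemma W1p_norm_nonneg: "W1p_norm p G u \<ge> 0"
  unfolding W1p_norm_def by (rule powr_ge_zero)

lemma frac_lt:
  fixes a w :: real
  assumes a: "a \<ge> 0" and w: "w > 0"
  shows "w * a / (2 * (a + 1)) < w"
proof -
  have d: "2 * (a + 1) > 0" using a by simp
  have "a < 2 * (a + 1)" using a by simp
  then have "w * a < w * (2 * (a + 1))" using w by (rule mult_strict_left_mono)
  then show ?thesis using d by (simp add: divide_less_eq)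
qed

lemma W1p_norm_zero_fun:
  fixes G :: "(real^('n::{finite,linorder})) set"
  assumes G: "open G" "bounded G" "G \<noteq> {}" and p: "p > 0" and T: "teo_bounded p G"
  shows "W1p_norm p G (\<lambda>x. 0) = 0"
proof (rule ccontr)
  define w0 where "w0 = W1p_norm p G (\<lambda>x::real^('n::{finite,linorder}). 0)"
  define L1 where "L1 = Lp_norm p G (\<lambda>x::real^('n::{finite,linorder}). 1)"
  define k where "k = teo_opnorm p G"
  assume "\<not> ?thesis"
  then have w0: "w0 > 0" using W1p_norm_nonneg[of p G "\<lambda>x::real^('n::{finite,linorder}). 0"] unfolding w0_def by linarith
  have L1: "L1 > 0" unfolding L1_def by (rule Lp_norm_one_pos[OF G p])
  have bnd: "w0 \<le> k * c * L1" if c: "c > 0" for c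
  proof -
    define f where "f = (\<lambda>x::real^('n::{finite,linorder}). cl_scalar ((\<lambda>x. c) x) :: 'n cl)"
    have fL: "cl_Lp p G f" unfolding f_def by (rule cl_Lp_scalar[OF in_Lp_const[OF G(1,2)]])
    have fn: "cl_Lp_norm p G f = c * L1"
      unfolding f_def cl_Lp_norm_scalar L1_def using Lp_norm_const[OF c p, of G] by simp
    have fn0: "cl_Lp_norm p G f \<noteq> 0" using fn c L1 by simp
    have "cl_W1p_norm p G (teodorescu G f) / cl_Lp_norm p G f
          \<in> {cl_W1p_norm p G (teodorescu G f) / cl_Lp_norm p G f | f. cl_Lp p G f \<and> cl_Lp_norm p G f \<noteq> 0}"
      using fL fn0 by blast
    then have "cl_W1p_norm p G (teodorescu G f) / cl_Lp_norm p G f \<le> k"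
      unfolding k_def teo_opnorm_def using T unfolding teo_bounded_def by (intro cSup_upper) auto
    then have le: "cl_W1p_norm p G (teodorescu G f) \<le> k * (c * L1)"
      using fn c L1 by (simp add: pos_divide_le_eq)
    have "(\<lambda>x. teodorescu G f x {}) = (\<lambda>x. 0)"
      unfolding f_def by (intro ext teo_scalar_empty)
    then have "w0 \<le> cl_W1p_norm p G (teodorescu G f)"
      using W1p_norm_ge_comp[of p G "teodorescu G f" "{}"] unfolding w0_def by simp
    then show ?thesis using le by (simp add: mult.assoc)
  qed
  define c where "c = w0 / (2 * (\<bar>k\<bar> * L1 + 1))"
  have "\<bar>k\<bar> * L1 \<ge> 0" using L1 by simp
  then have "\<bar>k\<bar> * L1 + 1 > 0" by (rule add_nonneg_pos) simp
  then have "2 * (\<bar>k\<bar> * L1 + 1) > 0" by (intro mult_pos_pos) simp_all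
  then have cpos: "c > 0" unfolding c_def using w0 by (rule divide_pos_pos[rotated])
  have "k * c * L1 \<le> \<bar>k\<bar> * L1 * c" using cpos L1
    by (metis abs_ge_self mult.commute mult_right_mono less_imp_le mult.left_commute)
  also have "\<bar>k\<bar> * L1 * c < w0"
  proof -
    have "\<bar>k\<bar> * L1 * c = w0 * (\<bar>k\<bar> * L1) / (2 * (\<bar>k\<bar> * L1 + 1))" unfolding c_def by simp
    also have "\<dots> < w0"
      using w0 L1 by (intro frac_lt) simp_all
    finally show ?thesis .
  qed
  finally show False using bnd[OF cpos] by simp
qed

lemma teo_bound:
  fixes G :: "(real^('n::{finite,linorder})) set"
  assumes G: "open G" "bounded G" "G \<noteq> {}" and p: "p > 0" and T: "teo_bounded p G"
    and f: "cl_Lp p G f"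
  shows "cl_W1p_norm p G (teodorescu G f) \<le> teo_opnorm p G * cl_Lp_norm p G f"
proof (cases "cl_Lp_norm p G f = 0")
  case True
  have "Lp_norm p G (\<lambda>x. f x A) = 0" for A
    using True unfolding cl_Lp_norm_def by (rule sqrt_sum_sq_zero)
  then have "AE y in lebesgue. y \<in> G \<longrightarrow> f y A = 0" for A
    using Lp_norm_zero_AE[OF _ p, of G "\<lambda>x. f x A"] f unfolding cl_Lp_def by blast
  then have "teodorescu G f = (\<lambda>x C. 0)" by (rule teo_zero)
  then show ?thesis using True W1p_norm_zero_fun[OF G p T] by (simp add: cl_W1p_norm_def)
next
  case False
  have "cl_W1p_norm p G (teodorescu G f) / cl_Lp_norm p G f
        \<in> {cl_W1p_norm p G (teodorescu G f) / cl_Lp_norm p G f | f. cl_Lp p G f \<and> cl_Lp_norm p G f \<noteq> 0}"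
    using f False by blast
  then have "cl_W1p_norm p G (teodorescu G f) / cl_Lp_norm p G f \<le> teo_opnorm p G"
    unfolding teo_opnorm_def using T unfolding teo_bounded_def by (intro cSup_upper) auto
  moreover have "cl_Lp_norm p G f > 0" using False unfolding cl_Lp_norm_def
    by (metis less_eq_real_def real_sqrt_ge_zero sum_nonneg zero_le_power2)
  ultimately show ?thesis by (simp add: pos_divide_le_eq)
qed

lemma teo_opnorm_nonneg:
  fixes G :: "(real^('n::{finite,linorder})) set"
  assumes G: "open G" "bounded G" "G \<noteq> {}" and p: "p > 0" and T: "teo_bounded p G"
  shows "teo_opnorm p G \<ge> 0"
proof -
  define f where "f = (\<lambda>x::real^('n::{finite,linorder}). cl_scalar ((\<lambda>x. 1) x) :: 'n cl)"
  have fL: "cl_Lp p G f" unfolding f_def by (rule cl_Lp_scalar[OF in_Lp_const[OF G(1,2)]])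
  have fn: "cl_Lp_norm p G f > 0"
    unfolding f_def cl_Lp_norm_scalar using Lp_norm_one_pos[OF G p] by simp
  have "cl_W1p_norm p G (teodorescu G f) / cl_Lp_norm p G f
        \<in> {cl_W1p_norm p G (teodorescu G f) / cl_Lp_norm p G f | f. cl_Lp p G f \<and> cl_Lp_norm p G f \<noteq> 0}"
    using fL fn by auto
  then have "cl_W1p_norm p G (teodorescu G f) / cl_Lp_norm p G f \<le> teo_opnorm p G"
    unfolding teo_opnorm_def using T unfolding teo_bounded_def by (intro cSup_upper) auto
  moreover have "cl_W1p_norm p G (teodorescu G f) / cl_Lp_norm p G f \<ge> 0"
    using fn unfolding cl_W1p_norm_def by (intro divide_nonneg_pos real_sqrt_ge_zero sum_nonneg) auto
  ultimately show ?thesis by linarith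
qed

lemma W1p_norm_zero_Lp:
  assumes p: "p > 0" and z: "W1p_norm p G u = 0"
  shows "Lp_norm p G u = 0"
proof -
  define S where "S = (\<Sum>j\<in>UNIV. Lp_norm p G (SOME g. in_Lp p G g \<and> weak_partial G j u g) powr p)"
  have S: "S \<ge> 0" unfolding S_def by (intro sum_nonneg) simp
  have "Lp_norm p G u powr p + S = 0" using z unfolding W1p_norm_def S_def by simp
  then have "Lp_norm p G u powr p = 0" using S by (smt (verit) powr_ge_zero)
  then show ?thesis by simp
qed

lemma embed_bound:
  fixes G :: "(real^'n::finite) set"
  assumes p: "p > 0" and E: "embed_bounded p G" and u: "cl_W1p p G u"
  shows "cl_Lp_norm (2 * p) G u \<le> embed_const p G * cl_W1p_norm p G u"
proof (cases "cl_W1p_norm p G u = 0")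
  case True
  have "Lp_norm (2 * p) G (\<lambda>x. u x A) = 0" for A
  proof -
    have "W1p_norm p G (\<lambda>x. u x A) = 0"
      using True unfolding cl_W1p_norm_def by (rule sqrt_sum_sq_zero)
    then have "Lp_norm p G (\<lambda>x. u x A) = 0" by (rule W1p_norm_zero_Lp[OF p])
    moreover have "in_Lp p G (\<lambda>x. u x A)" using u unfolding cl_W1p_def in_W1p_def by blast
    ultimately have "AE y in lebesgue. y \<in> G \<longrightarrow> u y A = 0"
      using Lp_norm_zero_AE[OF _ p] by blast
    then have "AE y in lebesgue. indicator G y *\<^sub>R \<bar>u y A\<bar> powr (2 * p) = 0"
      by eventually_elim (auto simp: indicator_def)
    then have "(LINT y:G|lebesgue. \<bar>u y A\<bar> powr (2 * p)) = 0"
      unfolding set_lebesgue_integral_def by (rule integral_eq_zero_AE)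
    then show ?thesis by (simp add: Lp_norm_def)
  qed
  then show ?thesis using True by (simp add: cl_Lp_norm_def)
next
  case False
  have "cl_Lp_norm (2 * p) G u / cl_W1p_norm p G u
        \<in> {cl_Lp_norm (2 * p) G u / cl_W1p_norm p G u | u. cl_W1p p G u \<and> cl_W1p_norm p G u \<noteq> 0}"
    using u False by blast
  then have "cl_Lp_norm (2 * p) G u / cl_W1p_norm p G u \<le> embed_const p G"
    unfolding embed_const_def using E unfolding embed_bounded_def by (intro cSup_upper) auto
  moreover have "cl_W1p_norm p G u > 0" using False unfolding cl_W1p_norm_def
    by (metis less_eq_real_def real_sqrt_ge_zero sum_nonneg zero_le_power2)
  ultimately show ?thesis by (simp add: pos_divide_le_eq)
qed

lemma sum_singletons_le:
  fixes h :: "'n::finite set \<Rightarrow> real"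
  assumes "\<And>A. h A \<ge> 0"
  shows "(\<Sum>i\<in>UNIV. h {i}) \<le> (\<Sum>A\<in>UNIV. h A)"
proof -
  have "(\<Sum>i\<in>UNIV. h {i}) = (\<Sum>A\<in>(\<lambda>i. {i}) ` UNIV. h A)"
    by (subst sum.reindex) (auto simp: inj_on_def)
  also have "\<dots> \<le> (\<Sum>A\<in>UNIV. h A)"
    by (rule sum_mono2) (auto simp: assms)
  finally show ?thesis .
qed

lemma g_bound:
  fixes G :: "(real^('n::{finite,linorder})) set" and u :: "real^('n::{finite,linorder}) \<Rightarrow> 'n cl"
  assumes p: "p \<ge> 1" and V: "in_Lp p G V" and E: "embed_bounded p G" and u: "cl_W1p p G u"
  shows "in_Lp p G (\<lambda>x. V x + vec_abs2 (u x))
     \<and> Lp_norm p G (\<lambda>x. V x + vec_abs2 (u x)) \<le> Lp_norm p G V + (embed_const p G)\<^sup>2 * (cl_W1p_norm p G u)\<^sup>2"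
proof -
  have p0: "p > 0" using p by simp
  have u2: "cl_Lp (2 * p) G u" using E u unfolding embed_bounded_def by blast
  have ui: "in_Lp p G (\<lambda>x. (u x {i})\<^sup>2)" for i
    using in_Lp_sq(1)[OF p0, of G "\<lambda>x. u x {i}"] u2 unfolding cl_Lp_def by blast
  have uin: "Lp_norm p G (\<lambda>x. (u x {i})\<^sup>2) = (Lp_norm (2 * p) G (\<lambda>x. u x {i}))\<^sup>2" for i
    using in_Lp_sq(2)[OF p0, of G "\<lambda>x. u x {i}"] u2 unfolding cl_Lp_def by blast
  have S: "in_Lp p G (\<lambda>x. \<Sum>i\<in>UNIV. (u x {i})\<^sup>2)"
      "Lp_norm p G (\<lambda>x. \<Sum>i\<in>UNIV. (u x {i})\<^sup>2) \<le> (\<Sum>i\<in>UNIV. Lp_norm p G (\<lambda>x. (u x {i})\<^sup>2))"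
    using in_Lp_sum[where p=p and I=UNIV and f="\<lambda>i x. (u x {i})\<^sup>2" and G=G] p ui by auto
  have va: "(\<lambda>x. vec_abs2 (u x)) = (\<lambda>x. \<Sum>i\<in>UNIV. (u x {i})\<^sup>2)"
    by (simp add: vec_abs2_def)
  have "(\<Sum>i\<in>UNIV. Lp_norm p G (\<lambda>x. (u x {i})\<^sup>2)) = (\<Sum>i\<in>UNIV. (Lp_norm (2 * p) G (\<lambda>x. u x {i}))\<^sup>2)"
    by (simp add: uin)
  also have "\<dots> \<le> (\<Sum>A\<in>UNIV. (Lp_norm (2 * p) G (\<lambda>x. u x A))\<^sup>2)"
    by (rule sum_singletons_le[where h = "\<lambda>A. (Lp_norm (2 * p) G (\<lambda>x. u x A))\<^sup>2"]) simp
  also have "\<dots> = (cl_Lp_norm (2 * p) G u)\<^sup>2"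
    unfolding cl_Lp_norm_def by (rule real_sqrt_pow2[symmetric]) (intro sum_nonneg, simp)
  also have "\<dots> \<le> (embed_const p G * cl_W1p_norm p G u)\<^sup>2"
  proof (rule power_mono)
    show "cl_Lp_norm (2 * p) G u \<le> embed_const p G * cl_W1p_norm p G u"
      by (rule embed_bound[OF p0 E u])
    show "0 \<le> cl_Lp_norm (2 * p) G u" unfolding cl_Lp_norm_def by (intro real_sqrt_ge_zero sum_nonneg) simp
  qed
  also have "\<dots> = (embed_const p G)\<^sup>2 * (cl_W1p_norm p G u)\<^sup>2" by (simp add: power_mult_distrib)
  finally have sq: "Lp_norm p G (\<lambda>x. vec_abs2 (u x)) \<le> (embed_const p G)\<^sup>2 * (cl_W1p_norm p G u)\<^sup>2"
    using S(2) unfolding va by linarith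
  have inS: "in_Lp p G (\<lambda>x. vec_abs2 (u x))" using S(1) unfolding va .
  show ?thesis
    using in_Lp_add[OF p V inS] Lp_minkowski[OF p V inS] sq by linarith
qed

theorem lemma1:
  fixes G :: "(real^'n::{finite,linorder}) set"
    and p :: real and V :: "real^('n::{finite,linorder}) \<Rightarrow> real"
    and a :: "nat \<Rightarrow> real^('n::{finite,linorder}) \<Rightarrow> 'n cl"
    and k1 k2 C W :: real and m0 :: nat
  assumes n2: "CARD('n) \<ge> 2"
    and dom: "smooth_bounded_domain G"
    and p_rng: "(CARD('n) > 2 \<longrightarrow> real CARD('n) > p \<and> p \<ge> real CARD('n) / 2 \<and> real CARD('n) / 2 > 1)
               \<and> (CARD('n) = 2 \<longrightarrow> real CARD('n) > p \<and> p > 1)"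
    and V: "in_Lp p G V"
    and T_bdd: "teo_bounded p G" and k1: "k1 = teo_opnorm p G"
    and E_bdd: "embed_bounded p G" and C: "C = embed_const p G"
    and k2: "k2 = k1 * C\<^sup>2"
    and a0: "cl_W1p p G (a 0)" "vector_valued_on G (a 0)"
    and a_rec: "\<And>m. a (Suc m) = teodorescu G (\<lambda>x. cl_scalar (V x + vec_abs2 (a m x)))"
    and V_small: "Lp_norm p G V \<le> 1 / (4 * k1 * k2)"
    and W: "W = sqrt (1 / (4 * k2\<^sup>2) - (k1 / k2) * Lp_norm p G V)"
    and lo: "1 / (2 * k2) - W \<le> cl_W1p_norm p G (a m0)"
    and hi: "cl_W1p_norm p G (a m0) \<le> 1 / (2 * k2) + W"
  shows "cl_W1p_norm p G (a (Suc m0)) \<le> cl_W1p_norm p G (a m0)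
         \<and> (\<forall>m\<ge>m0. cl_W1p_norm p G (a m) \<le> cl_W1p_norm p G (a m0))"
proof -
  have Gop: "open G" and Gb: "bounded G" and Gne: "G \<noteq> {}"
    using dom unfolding smooth_bounded_domain_def by auto
  have p1: "p > 1"
  proof (cases "CARD('n) = 2")
    case True then show ?thesis using p_rng by simp
  next
    case False
    then have "CARD('n) > 2" using n2 by simp
    then show ?thesis using p_rng by simp
  qed
  have p: "p \<ge> 1" and p0: "p > 0" using p1 by simp_all
  define N where "N = Lp_norm p G V"
  define x where "x m = cl_W1p_norm p G (a m)" for m
  have N0: "N \<ge> 0" unfolding N_def by (rule Lp_norm_nonneg)
  have x0: "x m \<ge> 0" for m unfolding x_def cl_W1p_norm_def by (intro real_sqrt_ge_zero sum_nonneg) simp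
  have k10: "k1 \<ge> 0" unfolding k1 by (rule teo_opnorm_nonneg[OF Gop Gb Gne p0 T_bdd])
  have k20: "k2 \<ge> 0" unfolding k2 using k10 by simp
  have W1: "cl_W1p p G (a m)" for m
  proof (induction m)
    case 0 then show ?case by (rule a0(1))
  next
    case (Suc m)
    have g: "in_Lp p G (\<lambda>x. V x + vec_abs2 (a m x))"
      using g_bound[OF p V E_bdd Suc] by blast
    have "cl_Lp p G (\<lambda>x. cl_scalar (V x + vec_abs2 (a m x)))"
      by (rule cl_Lp_scalar[OF g])
    then show ?case unfolding a_rec using T_bdd unfolding teo_bounded_def by blast
  qed
  have rec: "x (Suc m) \<le> k1 * N + k2 * (x m)\<^sup>2" for m
  proof -
    have g: "in_Lp p G (\<lambda>x. V x + vec_abs2 (a m x))"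
      and gn: "Lp_norm p G (\<lambda>x. V x + vec_abs2 (a m x)) \<le> N + C\<^sup>2 * (x m)\<^sup>2"
      using g_bound[OF p V E_bdd W1[of m]] unfolding N_def x_def C by auto
    have "x (Suc m) \<le> k1 * cl_Lp_norm p G (\<lambda>x. cl_scalar (V x + vec_abs2 (a m x)))"
      unfolding x_def a_rec k1 by (rule teo_bound[OF Gop Gb Gne p0 T_bdd cl_Lp_scalar[OF g]])
    also have "\<dots> = k1 * Lp_norm p G (\<lambda>x. V x + vec_abs2 (a m x))"
      by (simp add: cl_Lp_norm_scalar)
    also have "\<dots> \<le> k1 * (N + C\<^sup>2 * (x m)\<^sup>2)"
      using gn k10 by (rule mult_left_mono)
    also have "\<dots> = k1 * N + k2 * (x m)\<^sup>2" unfolding k2 by (simp add: algebra_simps)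
    finally show ?thesis .
  qed
  define X where "X = x m0"
  have fixpt: "k1 * N + k2 * X\<^sup>2 \<le> X"
  proof (cases "k2 = 0")
    case True
    have "W = 0" unfolding W using True by simp
    then have "X \<le> 0" using hi True unfolding X_def x_def by simp
    then have X0: "X = 0" using x0[of m0] unfolding X_def by simp
    have "N \<le> 0" using V_small True unfolding N_def by simp
    then have "N = 0" using N0 by simp
    then show ?thesis using X0 True by simp
  next
    case False
    then have k2p: "k2 > 0" using k20 by simp
    then have k1p: "k1 > 0" using k10 unfolding k2 by (cases "k1 = 0") auto
    define R where "R = 1 / (4 * k2\<^sup>2) - (k1 / k2) * N"
    have "(k1 / k2) * N \<le> (k1 / k2) * (1 / (4 * k1 * k2))"
      using V_small k1p k2p unfolding N_def by (intro mult_left_mono) simp_all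
    also have "\<dots> = 1 / (4 * k2\<^sup>2)" using k1p k2p by (simp add: power2_eq_square field_simps)
    finally have R0: "R \<ge> 0" unfolding R_def by simp
    have WsR: "W = sqrt R" unfolding W R_def N_def by (rule refl)
    have WR: "W\<^sup>2 = R" unfolding WsR using R0 by (rule real_sqrt_pow2)
    have W0: "W \<ge> 0" unfolding WsR by (rule real_sqrt_ge_zero[OF R0])
    have "\<bar>X - 1 / (2 * k2)\<bar> \<le> \<bar>W\<bar>" using lo hi W0 unfolding X_def x_def by simp
    then have "(X - 1 / (2 * k2))\<^sup>2 \<le> W\<^sup>2" by (simp add: abs_le_square_iff)
    then have "(X - 1 / (2 * k2))\<^sup>2 \<le> R" using WR by simp
    moreover have "(X - 1 / (2 * k2))\<^sup>2 = X\<^sup>2 - X / k2 + 1 / (4 * k2\<^sup>2)"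
      using k2p by (simp add: power2_diff power2_eq_square field_simps)
    ultimately have "X\<^sup>2 - X / k2 \<le> - ((k1 / k2) * N)" unfolding R_def by simp
    then have "k2 * (X\<^sup>2 - X / k2) \<le> k2 * (- ((k1 / k2) * N))"
      using k2p by (intro mult_left_mono) simp_all
    then show ?thesis using k2p by (simp add: algebra_simps)
  qed
  have step: "k1 * N + k2 * (x m)\<^sup>2 \<le> X" if "x m \<le> X" for m
  proof -
    have "(x m)\<^sup>2 \<le> X\<^sup>2" using that x0[of m] by (intro power_mono) simp_all
    then have "k2 * (x m)\<^sup>2 \<le> k2 * X\<^sup>2" using k20 by (rule mult_left_mono)
    then show ?thesis using fixpt by simp
  qed
  have inv: "x m \<le> X" if "m0 \<le> m" for m
    using that
  proof (induction m rule: nat_induct_at_least)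
    case base then show ?case unfolding X_def by simp
  next
    case (Suc m)
    then show ?case using rec[of m] step[of m] by simp
  qed
  have first: "x (Suc m0) \<le> X" using rec[of m0] step[of m0] unfolding X_def by simp
  show ?thesis using first inv unfolding x_def X_def by simp
qed

end
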